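(* Let $A\subset\mathbb{R}^d$ be compact, let $n\ge 0$, and let $z_0\in\mathbb{R}^d\setminus A$. Let $\mathcal S(A)$ denote the set of finite signed Borel measures on $A$ whose support contains the support of an optimal prediction measure of degree $n$, and let \[ \nu\in\operatorname{argmin}\Big\{|\nu|(A)\ :\ \nu\in\mathcal S(A),\ \int_A p(x)\,d\nu(x)=p(z_0)\ \text{for all } p\in\mathbb{R}_n(A)\Big\}. \] Then $\mu_n:=\dfrac{|\nu|}{|\nu|(A)}$ is an optimal prediction measure of degree $n$.
   Context: $\mathbb{R}_n(A)$ denotes the space of (restrictions to $A$ of) real polynomials in $d$ variables of total degree at most $n$, of dimension $N$. $|\nu|$ is the total variation measure of $\nu$. For a probability measure $\mu$ on $A$ that is non-degenerate ($\int p^2\,d\mu>0$ for every nonzero $p\in\mathbb{R}_n(A)$), $K_n^\mu(z,z):=\sum_{k=1}^N|q_k(z)|^2$, where $\{q_1,\dots,q_N\}$ is a $\mu$-orthonormal basis of $\mathbb{R}_n(A)$. An optimal prediction measure of degree $n$ is a probability measure on $A$ minimizing $K_n^\mu(z_0,z_0)$ over all probability measures $\mu$ on $A$. *)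

theory Defs
  imports "HOL-Probability.Probability"
begin

text \<open>Points of R^d are elements of real^'d ('d a finite index type, d = CARD('d)).
  A multi-index is a function 'd \<Rightarrow> nat.\<close>

definition monomial :: "('d::finite \<Rightarrow> nat) \<Rightarrow> real^'d \<Rightarrow> real" where
  "monomial \<alpha> x = (\<Prod>i\<in>UNIV. (x $ i) ^ (\<alpha> i))"

definition mdeg :: "('d::finite \<Rightarrow> nat) \<Rightarrow> nat" where
  "mdeg \<alpha> = (\<Sum>i\<in>UNIV. \<alpha> i)"

definition polys :: "nat \<Rightarrow> (real^'d::finite \<Rightarrow> real) set" where
  "polys n = {p. \<exists>c :: ('d \<Rightarrow> nat) \<Rightarrow> real.
      p = (\<lambda>x. \<Sum>\<alpha>\<in>{\<alpha>. mdeg \<alpha> \<le> n}. c \<alpha> * monomial \<alpha> x)}"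

definition prob_measure_on :: "(real^'d::finite) set \<Rightarrow> (real^'d) measure \<Rightarrow> bool" where
  "prob_measure_on A \<mu> \<longleftrightarrow> sets \<mu> = sets borel \<and> prob_space \<mu> \<and> emeasure \<mu> (- A) = 0"

definition non_degenerate :: "nat \<Rightarrow> (real^'d::finite) measure \<Rightarrow> bool" where
  "non_degenerate n \<mu> \<longleftrightarrow>
     (\<forall>p\<in>polys n. p \<noteq> (\<lambda>x. 0) \<longrightarrow> (\<integral>x. (p x)^2 \<partial>\<mu>) > 0)"

definition orthonormal_basis :: "nat \<Rightarrow> (real^'d::finite) measure \<Rightarrow> (real^'d \<Rightarrow> real) list \<Rightarrow> bool" where
  "orthonormal_basis n \<mu> qs \<longleftrightarrow>
     set qs \<subseteq> polys n \<and>
     (\<forall>i<length qs. \<forall>j<length qs.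
        (\<integral>x. (qs ! i) x * (qs ! j) x \<partial>\<mu>) = (if i = j then 1 else 0)) \<and>
     (\<forall>p\<in>polys n. \<exists>c. p = (\<lambda>x. \<Sum>k<length qs. c k * (qs ! k) x))"

text \<open>Christoffel function / reproducing kernel on the diagonal, K_n^mu(z,z).
  (The value does not depend on the chosen orthonormal basis.)\<close>
definition Kn :: "nat \<Rightarrow> (real^'d::finite) measure \<Rightarrow> real^'d \<Rightarrow> real" where
  "Kn n \<mu> z = (SOME s. \<exists>qs. orthonormal_basis n \<mu> qs \<and> s = (\<Sum>k<length qs. ((qs ! k) z)^2))"

text \<open>Optimal prediction measure of degree n at z0 (minimisation among the
  non-degenerate probability measures on A, for which K_n is defined).\<close>
definition optimal_prediction_measure ::
  "(real^'d::finite) set \<Rightarrow> nat \<Rightarrow> real^'d \<Rightarrow> (real^'d) measure \<Rightarrow> bool" where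
  "optimal_prediction_measure A n z0 \<mu> \<longleftrightarrow>
     prob_measure_on A \<mu> \<and> non_degenerate n \<mu> \<and>
     (\<forall>\<mu>'. prob_measure_on A \<mu>' \<and> non_degenerate n \<mu>' \<longrightarrow> Kn n \<mu> z0 \<le> Kn n \<mu>' z0)"

definition msupport :: "(real^'d::finite) measure \<Rightarrow> (real^'d) set" where
  "msupport M = {x. \<forall>U. open U \<and> x \<in> U \<longrightarrow> emeasure M U > 0}"

text \<open>A finite signed Borel measure nu on A is represented by its polar decomposition
  d nu = h d|nu|: T = |nu| is a finite Borel measure concentrated on A and h is a Borel
  function with |h| = 1.  Then |nu|(A) = T(A), int p dnu = int p h dT, supp nu = supp T.\<close>
definition signed_measure_on ::
  "(real^'d::finite) set \<Rightarrow> (real^'d) measure \<Rightarrow> (real^'d \<Rightarrow> real) \<Rightarrow> bool" where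
  "signed_measure_on A T h \<longleftrightarrow>
     sets T = sets borel \<and> finite_measure T \<and> emeasure T (- A) = 0 \<and>
     h \<in> borel_measurable borel \<and> (\<forall>x. \<bar>h x\<bar> = 1)"

definition in_S :: "(real^'d::finite) set \<Rightarrow> nat \<Rightarrow> real^'d \<Rightarrow> (real^'d) measure \<Rightarrow> (real^'d \<Rightarrow> real) \<Rightarrow> bool" where
  "in_S A n z0 T h \<longleftrightarrow> signed_measure_on A T h \<and>
     (\<exists>\<mu>. optimal_prediction_measure A n z0 \<mu> \<and> msupport \<mu> \<subseteq> msupport T)"

definition reproduces :: "nat \<Rightarrow> real^'d::finite \<Rightarrow> (real^'d) measure \<Rightarrow> (real^'d \<Rightarrow> real) \<Rightarrow> bool" where
  "reproduces n z0 T h \<longleftrightarrow> (\<forall>p\<in>polys n. (\<integral>x. p x * h x \<partial>T) = p z0)"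

end

theory Submission
  imports Defs
begin


lemma mdeg_finite: "finite {\<alpha>::'d::finite \<Rightarrow> nat. mdeg \<alpha> \<le> n}"
proof -
  have "{\<alpha>::'d \<Rightarrow> nat. mdeg \<alpha> \<le> n} \<subseteq> PiE UNIV (\<lambda>_. {..n})"
  proof
    fix \<alpha> :: "'d \<Rightarrow> nat" assume "\<alpha> \<in> {\<alpha>. mdeg \<alpha> \<le> n}"
    then have "\<alpha> i \<le> n" for i
      using member_le_sum[of i UNIV \<alpha>] by (auto simp: mdeg_def)
    then show "\<alpha> \<in> PiE UNIV (\<lambda>_. {..n})" by auto
  qed
  then show ?thesis by (rule finite_subset) (intro finite_PiE, auto)
qed

lemma monomial_cont: "continuous_on UNIV (monomial \<alpha>)"
  unfolding monomial_def by (intro continuous_intros)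

lemma polys_cont: "p \<in> polys n \<Longrightarrow> continuous_on UNIV p"
  unfolding polys_def by (auto intro!: continuous_on_sum continuous_on_mult continuous_on_const monomial_cont)

lemma polys_zero: "(\<lambda>x. 0) \<in> polys n"
  unfolding polys_def by (rule CollectI, rule exI[of _ "\<lambda>_. 0"]) simp

lemma polys_lin: assumes "p \<in> polys n" "q \<in> polys n"
  shows "(\<lambda>x. a * p x + b * q x) \<in> polys n"
proof -
  obtain c d where c: "p = (\<lambda>x. \<Sum>\<alpha>\<in>{\<alpha>. mdeg \<alpha> \<le> n}. c \<alpha> * monomial \<alpha> x)"
    and d: "q = (\<lambda>x. \<Sum>\<alpha>\<in>{\<alpha>. mdeg \<alpha> \<le> n}. d \<alpha> * monomial \<alpha> x)"
    using assms unfolding polys_def by auto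
  show ?thesis unfolding polys_def
    by (rule CollectI, rule exI[of _ "\<lambda>\<alpha>. a * c \<alpha> + b * d \<alpha>"])
       (simp add: c d sum_distrib_left sum.distrib distrib_right mult.assoc)
qed

lemma polys_scale: "p \<in> polys n \<Longrightarrow> (\<lambda>x. a * p x) \<in> polys n"
  using polys_lin[of p n p a 0] by simp

lemma polys_sum: assumes "finite I" "\<forall>i\<in>I. f i \<in> polys n"
  shows "(\<lambda>x. \<Sum>i\<in>I. c i * f i x) \<in> polys n"
  using assms
proof (induction I rule: finite_induct)
  case empty then show ?case by (simp add: polys_zero)
next
  case (insert i I)
  then show ?case using polys_lin[of "f i" n "\<lambda>x. \<Sum>i\<in>I. c i * f i x" "c i" 1] by simp
qed

lemma polys_diff: "p \<in> polys n \<Longrightarrow> q \<in> polys n \<Longrightarrow> (\<lambda>x. p x - q x) \<in> polys n"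
  using polys_lin[of p n q 1 "-1"] by simp

lemma mdeg_zero: "mdeg (\<lambda>_. 0) = 0" by (simp add: mdeg_def)
lemma monomial_zero: "monomial (\<lambda>_. 0) x = 1" by (simp add: monomial_def)

lemma polys_monomial: assumes "mdeg \<alpha> \<le> n" shows "monomial \<alpha> \<in> polys n"
proof -
  have "monomial \<alpha> x = (\<Sum>\<beta>\<in>{\<alpha>. mdeg \<alpha> \<le> n}. (if \<beta> = \<alpha> then 1 else 0) * monomial \<beta> x)" for x
  proof -
    have "(\<Sum>\<beta>\<in>{\<alpha>. mdeg \<alpha> \<le> n}. (if \<beta> = \<alpha> then 1 else 0) * monomial \<beta> x)
       = (\<Sum>\<beta>\<in>{\<alpha>. mdeg \<alpha> \<le> n}. if \<beta> = \<alpha> then monomial \<beta> x else 0)"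
      by (rule sum.cong) auto
    also have "\<dots> = monomial \<alpha> x" using assms by (subst sum.delta[OF mdeg_finite]) simp
    finally show ?thesis by simp
  qed
  then have "monomial \<alpha> = (\<lambda>x. \<Sum>\<beta>\<in>{\<alpha>. mdeg \<alpha> \<le> n}. (if \<beta> = \<alpha> then 1 else 0) * monomial \<beta> x)"
    by (rule ext)
  then show ?thesis unfolding polys_def by (intro CollectI exI)
qed

lemma monomial_zero': "monomial (\<lambda>_. 0) = (\<lambda>x. 1)"
  by (rule ext) (simp add: monomial_def)

lemma polys_one: "(\<lambda>x. 1) \<in> polys n"
  using polys_monomial[of "\<lambda>_. 0" n] by (simp add: mdeg_zero monomial_zero')

definition nice :: "(real^'d::finite) set \<Rightarrow> (real^'d) measure \<Rightarrow> bool" where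
  "nice A M \<longleftrightarrow> sets M = sets borel \<and> finite_measure M \<and> emeasure M (-A) = 0"

lemma prob_nice: "prob_measure_on A M \<Longrightarrow> nice A M"
  by (auto simp: prob_measure_on_def nice_def prob_space_def)

lemma nice_AE: assumes "compact A" "nice A M" shows "AE x in M. x \<in> A"
proof (rule AE_I')
  have "closed A" using assms compact_imp_closed by auto
  then have "-A \<in> sets M" using assms by (auto simp: nice_def)
  then show "-A \<in> null_sets M" using assms by (auto simp: nice_def null_sets_def)
qed auto

lemma cont_meas: "continuous_on UNIV f \<Longrightarrow> sets M = sets borel \<Longrightarrow> (f::_\<Rightarrow>real) \<in> borel_measurable M"
  using borel_measurable_continuous_onI measurable_cong_sets by blast

lemma bor_meas: "(f::_\<Rightarrow>real) \<in> borel_measurable borel \<Longrightarrow> sets M = sets borel \<Longrightarrow> f \<in> borel_measurable M"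
  using measurable_cong_sets by blast

lemma nice_integrable:
  fixes f g :: "_ \<Rightarrow> real"
  assumes "compact A" "nice A M" "continuous_on UNIV f" "g \<in> borel_measurable borel" "\<forall>x. \<bar>g x\<bar> \<le> 1"
  shows "integrable M (\<lambda>x. f x * g x)"
proof -
  interpret finite_measure M using assms(2) nice_def by auto
  have "compact (f ` A)" using compact_continuous_image[OF continuous_on_subset[OF assms(3)] assms(1)] by auto
  then have "bounded (f ` A)" by (rule compact_imp_bounded)
  then obtain B where B0: "\<forall>y\<in>f ` A. norm y \<le> B" unfolding bounded_iff by blast
  have B: "\<forall>x\<in>A. \<bar>f x\<bar> \<le> B" using B0 by simp
  show ?thesis
  proof (rule integrable_const_bound[where B=B])
    show "AE x in M. norm (f x * g x) \<le> B"
      using nice_AE[OF assms(1,2)]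
    proof eventually_elim
      case (elim x)
      have "\<bar>f x\<bar> * \<bar>g x\<bar> \<le> \<bar>f x\<bar> * 1" using assms(5) by (intro mult_left_mono) auto
      moreover have "\<bar>f x\<bar> \<le> B" using B elim by blast
      moreover have "norm (f x * g x) = \<bar>f x\<bar> * \<bar>g x\<bar>" by (simp add: abs_mult)
      ultimately show ?case by linarith
    qed
    have sM: "sets M = sets borel" using assms(2) by (simp add: nice_def)
    show "(\<lambda>x. f x * g x) \<in> borel_measurable M"
      using cont_meas[OF assms(3) sM] bor_meas[OF assms(4) sM] by measurable
  qed
qed

lemma nice_integrable_cont:
  fixes f :: "_ \<Rightarrow> real"
  assumes "compact A" "nice A M" "continuous_on UNIV f"
  shows "integrable M f"
  using nice_integrable[OF assms(1,2,3), of "\<lambda>_. 1"] by simp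

lemma cs_ineq:
  fixes f :: "_ \<Rightarrow> real"
  assumes "finite_measure M" "integrable M f" "integrable M (\<lambda>x. (f x)^2)"
  shows "(\<integral>x. f x \<partial>M)^2 \<le> measure M (space M) * (\<integral>x. (f x)^2 \<partial>M)"
proof -
  interpret finite_measure M by fact
  define m where "m = measure M (space M)"
  define I where "I = (\<integral>x. f x \<partial>M)"
  define J where "J = (\<integral>x. (f x)^2 \<partial>M)"
  have m0: "m \<ge> 0" by (simp add: m_def)
  have eq: "(\<lambda>x. (m * f x - I)^2) = (\<lambda>x. m^2 * (f x)^2 + ((- 2*m*I) * f x + I^2))"
    by (rule ext) (simp add: power2_eq_square algebra_simps)
  have "0 \<le> (\<integral>x. (m * f x - I)^2 \<partial>M)" by (rule integral_nonneg_AE) auto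
  also have "\<dots> = m^2 * J + ((- 2*m*I) * I + m * I^2)"
    unfolding eq using assms by (simp add: integral_add integral_mult_right m_def J_def I_def)
  also have "\<dots> = m * (m * J - I^2)" by (simp add: power2_eq_square algebra_simps)
  finally have h: "0 \<le> m * (m * J - I^2)" .
  show ?thesis
  proof (cases "m = 0")
    case True
    then have "emeasure M (space M) = 0" by (simp add: m_def emeasure_eq_measure)
    then have "AE x in M. f x = 0" by (intro AE_I'[of "space M"]) (auto simp: null_sets_def)
    then have "I = 0" unfolding I_def by (rule integral_eq_zero_AE)
    then show ?thesis using True by (simp add: m_def I_def)
  next
    case False
    then have "m > 0" using m0 by auto
    then have "0 \<le> m * J - I^2" using h by (simp add: zero_le_mult_iff)
    then show ?thesis by (simp add: m_def I_def J_def)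
  qed
qed




locale nd =
  fixes A :: "(real^'d::finite) set" and \<mu> :: "(real^'d) measure" and n :: nat
  assumes cA: "compact A" and nice: "nice A \<mu>" and ndg: "non_degenerate n \<mu>"
begin

definition ip :: "(real^'d \<Rightarrow> real) \<Rightarrow> (real^'d \<Rightarrow> real) \<Rightarrow> real" where
  "ip f g = (\<integral>x. f x * g x \<partial>\<mu>)"

lemma int_pp: "p \<in> polys n \<Longrightarrow> q \<in> polys n \<Longrightarrow> integrable \<mu> (\<lambda>x. p x * q x)"
  by (rule nice_integrable_cont[OF cA nice]) (intro continuous_on_mult polys_cont)

lemma ip_sym: "ip f g = ip g f"
  unfolding ip_def by (simp add: mult.commute)

lemma ip_sum_right:
  assumes "finite K" "\<And>k. k \<in> K \<Longrightarrow> integrable \<mu> (\<lambda>x. f x * g k x)"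
  shows "ip f (\<lambda>x. \<Sum>k\<in>K. a k * g k x) = (\<Sum>k\<in>K. a k * ip f (g k))"
proof -
  have "(\<lambda>x. f x * (\<Sum>k\<in>K. a k * g k x)) = (\<lambda>x. \<Sum>k\<in>K. a k * (f x * g k x))"
    by (rule ext) (simp add: sum_distrib_left mult.left_commute)
  then show ?thesis unfolding ip_def using assms
    by (simp add: integral_sum)
qed

lemma ip_diff_right:
  assumes "integrable \<mu> (\<lambda>x. f x * g x)" "integrable \<mu> (\<lambda>x. f x * h x)"
  shows "ip f (\<lambda>x. g x - h x) = ip f g - ip f h"
proof -
  have "(\<lambda>x. f x * (g x - h x)) = (\<lambda>x. f x * g x - f x * h x)"
    by (rule ext) (simp add: right_diff_distrib)
  then show ?thesis unfolding ip_def using assms by simp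
qed

lemma ip_scale_right: "ip f (\<lambda>x. c * g x) = c * ip f (g)"
proof -
  have "(\<lambda>x. f x * (c * g x)) = (\<lambda>x. c * (f x * g x))"
    by (rule ext) (simp add: mult.left_commute)
  then show ?thesis unfolding ip_def by simp
qed

definition ONl :: "(real^'d \<Rightarrow> real) list \<Rightarrow> bool" where
  "ONl qs \<longleftrightarrow> set qs \<subseteq> polys n \<and>
     (\<forall>i<length qs. \<forall>j<length qs. ip (qs!i) (qs!j) = (if i = j then 1 else 0))"

lemma gs:
  assumes "finite I" "\<forall>i\<in>I. m i \<in> polys n"
  shows "\<exists>qs. ONl qs \<and> (\<forall>i\<in>I. \<exists>c. m i = (\<lambda>x. \<Sum>k<length qs. c k * (qs!k) x))"
  using assms
proof (induction I rule: finite_induct)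
  case empty then show ?case by (intro exI[of _ "[]"]) (simp add: ONl_def)
next
  case (insert i I)
  then obtain qs where on: "ONl qs" and sp: "\<forall>j\<in>I. \<exists>c. m j = (\<lambda>x. \<Sum>k<length qs. c k * (qs!k) x)"
    by auto
  define L where "L = length qs"
  define a where "a k = ip (m i) (qs!k)" for k
  define s where "s = (\<lambda>x. \<Sum>k<L. a k * (qs!k) x)"
  define r where "r = (\<lambda>x. m i x - s x)"
  have qsp: "\<And>k. k < L \<Longrightarrow> qs!k \<in> polys n" using on by (auto simp: ONl_def L_def)
  have qon: "\<And>j k. j < L \<Longrightarrow> k < L \<Longrightarrow> ip (qs!j) (qs!k) = (if j = k then 1 else 0)"
    using on by (auto simp: ONl_def L_def)
  have mi: "m i \<in> polys n" using insert by auto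
  have sp': "s \<in> polys n" unfolding s_def by (rule polys_sum) (auto simp: qsp)
  have rp: "r \<in> polys n" unfolding r_def by (rule polys_diff[OF mi sp'])
  have ipr: "ip (qs!j) r = 0" if j: "j < L" for j
  proof -
    have "ip (qs!j) r = ip (qs!j) (m i) - ip (qs!j) s"
      unfolding r_def by (rule ip_diff_right) (auto intro!: int_pp qsp j mi sp')
    also have "ip (qs!j) s = (\<Sum>k<L. a k * ip (qs!j) (qs!k))"
      unfolding s_def by (rule ip_sum_right) (auto intro!: int_pp qsp j)
    also have "\<dots> = (\<Sum>k<L. if k = j then a k else 0)"
      by (rule sum.cong) (auto simp: qon j)
    also have "\<dots> = a j" using j by (simp add: sum.delta)
    finally show ?thesis by (simp add: a_def ip_sym)
  qed
  show ?case
  proof (cases "r = (\<lambda>x. 0)")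
    case True
    have "m i x = s x" for x using fun_cong[OF True, of x] by (simp add: r_def)
    then have "m i = s" by (rule ext)
    then have "m i = (\<lambda>x. \<Sum>k<length qs. a k * (qs!k) x)" by (simp add: s_def L_def)
    then show ?thesis using on sp by auto
  next
    case False
    define v where "v = ip r r"
    have "(\<integral>x. (r x)^2 \<partial>\<mu>) > 0" using ndg rp False by (auto simp: non_degenerate_def)
    then have v0: "v > 0" by (simp add: v_def ip_def power2_eq_square)
    define qn where "qn = (\<lambda>x. (1 / sqrt v) * r x)"
    define qs' where "qs' = qs @ [qn]"
    have len: "length qs' = Suc L" by (simp add: qs'_def L_def)
    have nth: "qs' ! k = (if k < L then qs!k else qn)" if "k < Suc L" for k
      using that by (auto simp: qs'_def nth_append L_def)
    have qnp: "qn \<in> polys n" unfolding qn_def by (rule polys_scale[OF rp])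
    have ipqn: "ip (qs!j) qn = 0" if "j < L" for j
      unfolding qn_def ip_scale_right using ipr[OF that] by simp
    have ipqnqn: "ip qn qn = 1"
    proof -
      have e1: "ip qn qn = (1 / sqrt v) * ip qn r" unfolding qn_def by (rule ip_scale_right)
      have "ip qn r = ip r qn" by (rule ip_sym)
      also have "\<dots> = (1 / sqrt v) * v" unfolding qn_def v_def by (rule ip_scale_right)
      finally have "ip qn qn = (1 / sqrt v) * ((1 / sqrt v) * v)" using e1 by simp
      also have "\<dots> = 1" using v0 by (simp add: field_simps)
      finally show ?thesis .
    qed
    have on': "ONl qs'"
      unfolding ONl_def
    proof (intro conjI allI impI)
      show "set qs' \<subseteq> polys n" using on qnp by (auto simp: ONl_def qs'_def)
      fix j k assume j: "j < length qs'" and k: "k < length qs'"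
      then have j': "j < Suc L" and k': "k < Suc L" using len by auto
      show "ip (qs'!j) (qs'!k) = (if j = k then 1 else 0)"
      proof -
        have jj: "j < L \<or> j = L" and kk: "k < L \<or> k = L" using j' k' by auto
        have nj: "qs'!j = (if j < L then qs!j else qn)" by (rule nth[OF j'])
        have nk: "qs'!k = (if k < L then qs!k else qn)" by (rule nth[OF k'])
        show ?thesis
        proof (cases "j < L")
          case True
          note jT = True
          show ?thesis
          proof (cases "k < L")
            case True then show ?thesis using jT nj nk qon by simp
          next
            case False then have "k = L" using kk by simp
            then show ?thesis using jT nj nk ipqn[OF jT] by simp
          qed
        next
          case False
          then have jL: "j = L" using jj by simp
          show ?thesis
          proof (cases "k < L")
            case True then show ?thesis using jL nj nk ipqn[OF True] ip_sym[of qn "qs!k"] by simp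
          next
            case False then have "k = L" using kk by simp
            then show ?thesis using jL nj nk ipqnqn by simp
          qed
        qed
      qed
    qed
    have ext2: "\<exists>c'. f = (\<lambda>x. \<Sum>k<length qs'. c' k * (qs'!k) x)"
      if "f = (\<lambda>x. (\<Sum>k<L. c k * (qs!k) x) + e * qn x)" for f c e
    proof (rule exI[of _ "\<lambda>k. if k < L then c k else e"])
      have "(\<Sum>k<length qs'. (if k < L then c k else e) * (qs'!k) x) = (\<Sum>k<L. c k * (qs!k) x) + e * qn x" for x
      proof -
        have "(\<Sum>k<length qs'. (if k < L then c k else e) * (qs'!k) x)
          = (\<Sum>k<L. (if k < L then c k else e) * (qs'!k) x) + e * (qs'!L) x"
          by (simp add: len)
        also have "(\<Sum>k<L. (if k < L then c k else e) * (qs'!k) x) = (\<Sum>k<L. c k * (qs!k) x)"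
          by (rule sum.cong) (auto simp: nth)
        also have "(qs'!L) = qn" by (simp add: nth)
        finally show ?thesis .
      qed
      then show "f = (\<lambda>x. \<Sum>k<length qs'. (if k < L then c k else e) * (qs'!k) x)"
        using that by simp
    qed
    have "\<forall>j\<in>insert i I. \<exists>c'. m j = (\<lambda>x. \<Sum>k<length qs'. c' k * (qs'!k) x)"
    proof
      fix j assume "j \<in> insert i I"
      then consider "j = i" | "j \<in> I" by auto
      then show "\<exists>c'. m j = (\<lambda>x. \<Sum>k<length qs'. c' k * (qs'!k) x)"
      proof cases
        case 1
        have "m i = (\<lambda>x. (\<Sum>k<L. a k * (qs!k) x) + sqrt v * qn x)"
          using v0 by (auto simp: qn_def r_def s_def)
        from ext2[OF this] show ?thesis using 1 by simp
      next
        case 2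
        then obtain c where "m j = (\<lambda>x. \<Sum>k<L. c k * (qs!k) x)" using sp L_def by auto
        then have "m j = (\<lambda>x. (\<Sum>k<L. c k * (qs!k) x) + 0 * qn x)" by simp
        from ext2[OF this] show ?thesis .
      qed
    qed
    then show ?thesis using on' by blast
  qed
qed

lemma ex_onb: "\<exists>qs. orthonormal_basis n \<mu> qs"
proof -
  define S where "S = {\<alpha>::'d \<Rightarrow> nat. mdeg \<alpha> \<le> n}"
  have fS: "finite S" unfolding S_def by (rule mdeg_finite)
  obtain qs where on: "ONl qs" and sp: "\<forall>\<alpha>\<in>S. \<exists>c. monomial \<alpha> = (\<lambda>x. \<Sum>k<length qs. c k * (qs!k) x)"
    using gs[OF fS, of monomial] polys_monomial by (auto simp: S_def)
  from sp obtain d where d: "\<forall>\<alpha>\<in>S. monomial \<alpha> = (\<lambda>x. \<Sum>k<length qs. d \<alpha> k * (qs!k) x)"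
    by metis
  have "\<exists>c. p = (\<lambda>x. \<Sum>k<length qs. c k * (qs ! k) x)" if pP: "p \<in> polys n" for p
  proof -
    obtain c where c: "p = (\<lambda>x. \<Sum>\<alpha>\<in>S. c \<alpha> * monomial \<alpha> x)"
      using pP unfolding polys_def S_def by auto
    have "p x = (\<Sum>k<length qs. (\<Sum>\<alpha>\<in>S. c \<alpha> * d \<alpha> k) * (qs ! k) x)" for x
    proof -
      have "p x = (\<Sum>\<alpha>\<in>S. c \<alpha> * (\<Sum>k<length qs. d \<alpha> k * (qs!k) x))"
        unfolding c by (rule sum.cong) (use d in auto)
      also have "\<dots> = (\<Sum>\<alpha>\<in>S. \<Sum>k<length qs. c \<alpha> * d \<alpha> k * (qs!k) x)"
        by (simp add: sum_distrib_left mult.assoc)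
      also have "\<dots> = (\<Sum>k<length qs. \<Sum>\<alpha>\<in>S. c \<alpha> * d \<alpha> k * (qs!k) x)"
        by (rule sum.swap)
      also have "\<dots> = (\<Sum>k<length qs. (\<Sum>\<alpha>\<in>S. c \<alpha> * d \<alpha> k) * (qs ! k) x)"
        by (simp add: sum_distrib_right)
      finally show ?thesis .
    qed
    then have "p = (\<lambda>x. \<Sum>k<length qs. (\<Sum>\<alpha>\<in>S. c \<alpha> * d \<alpha> k) * (qs ! k) x)" by (rule ext)
    then show ?thesis by (intro exI[where x="\<lambda>k. \<Sum>\<alpha>\<in>S. c \<alpha> * d \<alpha> k"])
  qed
  then have "orthonormal_basis n \<mu> qs"
    using on unfolding orthonormal_basis_def ONl_def ip_def by auto
  then show ?thesis by blast
qed

lemma kernel: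
  assumes "orthonormal_basis n \<mu> qs"
  shows "(\<lambda>x. \<Sum>j<length qs. (qs!j) z * (qs!j) x) \<in> polys n"
    and "\<forall>p\<in>polys n. (\<integral>x. p x * (\<Sum>j<length qs. (qs!j) z * (qs!j) x) \<partial>\<mu>) = p z"
proof -
  define L where "L = length qs"
  have qsp: "\<And>k. k < L \<Longrightarrow> qs!k \<in> polys n" using assms
    by (auto simp: orthonormal_basis_def L_def)
  have qon: "\<And>j k. j < L \<Longrightarrow> k < L \<Longrightarrow> ip (qs!j) (qs!k) = (if j = k then 1 else 0)"
    using assms by (auto simp: orthonormal_basis_def L_def ip_def)
  show "(\<lambda>x. \<Sum>j<length qs. (qs!j) z * (qs!j) x) \<in> polys n"
    by (rule polys_sum) (auto simp: qsp L_def)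
  show "\<forall>p\<in>polys n. (\<integral>x. p x * (\<Sum>j<length qs. (qs!j) z * (qs!j) x) \<partial>\<mu>) = p z"
  proof
    fix p :: "real^'d \<Rightarrow> real" assume p: "p \<in> polys n"
    then obtain c where c: "p = (\<lambda>x. \<Sum>k<L. c k * (qs ! k) x)"
      using assms by (auto simp: orthonormal_basis_def L_def)
    have pj: "ip p (qs!j) = c j" if j: "j < L" for j
    proof -
      have "ip p (qs!j) = ip (qs!j) p" by (rule ip_sym)
      also have "\<dots> = (\<Sum>k<L. c k * ip (qs!j) (qs!k))"
        unfolding c by (rule ip_sum_right) (auto intro!: int_pp qsp j)
      also have "\<dots> = (\<Sum>k<L. if k = j then c k else 0)"
        by (rule sum.cong) (auto simp: qon j)
      also have "\<dots> = c j" using j by (simp add: sum.delta)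
      finally show ?thesis .
    qed
    have "(\<integral>x. p x * (\<Sum>j<length qs. (qs!j) z * (qs!j) x) \<partial>\<mu>) = ip p (\<lambda>x. \<Sum>j<L. (qs!j) z * (qs!j) x)"
      by (simp add: ip_def L_def)
    also have "\<dots> = (\<Sum>j<L. (qs!j) z * ip p (qs!j))"
      by (rule ip_sum_right) (auto intro!: int_pp qsp p)
    also have "\<dots> = (\<Sum>j<L. c j * (qs!j) z)"
      by (rule sum.cong) (auto simp: pj)
    also have "\<dots> = p z" by (simp add: c)
    finally show "(\<integral>x. p x * (\<Sum>j<length qs. (qs!j) z * (qs!j) x) \<partial>\<mu>) = p z" .
  qed
qed

lemma Kn_kernel:
  "\<exists>k\<in>polys n. (\<forall>p\<in>polys n. (\<integral>x. p x * k x \<partial>\<mu>) = p z) \<and> Kn n \<mu> z = k z"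
proof -
  have "\<exists>s. \<exists>qs. orthonormal_basis n \<mu> qs \<and> s = (\<Sum>k<length qs. ((qs ! k) z)^2)"
    using ex_onb by blast
  from someI_ex[OF this] obtain qs where qs: "orthonormal_basis n \<mu> qs"
    and K: "Kn n \<mu> z = (\<Sum>k<length qs. ((qs ! k) z)^2)"
    unfolding Kn_def by blast
  show ?thesis
    by (rule bexI[OF _ kernel(1)[OF qs, of z]]) (use kernel(2)[OF qs, of z] K in \<open>simp add: power2_eq_square\<close>)
qed

end





lemma open_sets: "sets M = sets borel \<Longrightarrow> open U \<Longrightarrow> U \<in> sets M"
  by simp

lemma ae_msupport:
  fixes M :: "(real^'d::finite) measure"
  assumes sM: "sets M = sets borel" shows "AE x in M. x \<in> msupport M"
proof -
  obtain B :: "(real^'d) set set" where B: "countable B" "topological_basis B"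
    using ex_countable_basis by blast
  have opn: "\<And>U. U \<in> B \<Longrightarrow> open U" using B(2) topological_basis_open by auto
  let ?N = "\<Union>U\<in>{U\<in>B. emeasure M U = 0}. U"
  have "?N \<in> null_sets M"
  proof (rule null_sets_UN')
    show "countable {U\<in>B. emeasure M U = 0}" by (rule countable_subset[OF _ B(1)]) auto
    fix U assume "U \<in> {U\<in>B. emeasure M U = 0}"
    then show "U \<in> null_sets M" using opn sM by (auto simp: null_sets_def)
  qed
  moreover have "{x \<in> space M. x \<notin> msupport M} \<subseteq> ?N"
  proof
    fix x assume "x \<in> {x \<in> space M. x \<notin> msupport M}"
    then obtain V where V: "open V" "x \<in> V" "\<not> emeasure M V > 0" by (auto simp: msupport_def)
    then have V0: "emeasure M V = 0" by (simp add: not_gr_zero)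
    obtain U where U: "U \<in> B" "x \<in> U" "U \<subseteq> V" using topological_basisE[OF B(2) V(1,2)] by blast
    have "emeasure M U \<le> emeasure M V" by (rule emeasure_mono) (use U V sM in auto)
    then have "emeasure M U = 0" using V0 by simp
    then show "x \<in> ?N" using U by blast
  qed
  ultimately show ?thesis by (rule AE_I')
qed

lemma msupport_scale: "0 < c \<Longrightarrow> msupport (scale_measure c M) = msupport M"
  by (simp add: msupport_def ennreal_zero_less_mult_iff)

lemma scale_density:
  assumes "0 \<le> c" shows "scale_measure (ennreal c) M = density M (\<lambda>_. ennreal c)"
proof (rule measure_eqI)
  show "sets (scale_measure (ennreal c) M) = sets (density M (\<lambda>_. ennreal c))" by simp
  fix S assume "S \<in> sets (scale_measure (ennreal c) M)"
  then have S: "S \<in> sets M" by simp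
  show "emeasure (scale_measure (ennreal c) M) S = emeasure (density M (\<lambda>_. ennreal c)) S"
    using S by (simp add: emeasure_density nn_integral_cmult_indicator)
qed

lemma integral_scale:
  fixes f :: "_ \<Rightarrow> real"
  assumes "0 \<le> c" "f \<in> borel_measurable M"
  shows "(\<integral>x. f x \<partial>scale_measure (ennreal c) M) = c * (\<integral>x. f x \<partial>M)"
  unfolding scale_density[OF assms(1)] using assms
  by (simp add: integral_density)

lemma lin2:
  fixes a b s t :: real
  assumes "(1-t)*a + t*b = 0" "(1-s)*a + s*b = 0" "t \<noteq> s"
  shows "b = 0"
proof -
  have "(s - t) * (a - b) = ((1-t)*a + t*b) - ((1-s)*a + s*b)" by (simp add: algebra_simps)
  then have "(s - t) * (a - b) = 0" using assms by simp
  then have "a = b" using assms(3) by simp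
  then show ?thesis using assms(1) by (simp add: algebra_simps)
qed





lemma competitor:
  fixes A :: "(real^'d::finite) set" and T mu' :: "(real^'d) measure" and k h :: "real^'d \<Rightarrow> real"
  assumes cA: "compact A" and sm: "signed_measure_on A T h" and rep: "reproduces n z0 T h"
    and pm: "prob_measure_on A mu'" and kc: "continuous_on UNIV k"
    and krep: "\<forall>p\<in>polys n. (\<integral>x. p x * k x \<partial>mu') = p z0"
  shows "\<exists>t\<in>{0<..<1::real}. \<exists>T' h'. signed_measure_on A T' h' \<and> reproduces n z0 T' h'
     \<and> measure T' A \<le> (1-t) * (\<integral>x. \<bar>k x\<bar> \<partial>mu') + t * measure T A \<and> msupport T \<subseteq> msupport T'"
proof -
  have sT: "sets T = sets borel" and fT: "finite_measure T" and T0: "emeasure T (-A) = 0"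
    and hm[measurable]: "h \<in> borel_measurable borel" and h1: "\<And>x. \<bar>h x\<bar> = 1"
    using sm by (auto simp: signed_measure_on_def)
  have sM: "sets mu' = sets borel" and pM: "prob_space mu'" and M0: "emeasure mu' (-A) = 0"
    using pm by (auto simp: prob_measure_on_def)
  have fM: "finite_measure mu'" using pM by (simp add: prob_space_def)
  have niceT: "nice A T" and niceM: "nice A mu'" using sT fT T0 sM fM M0 by (auto simp: nice_def)
  interpret T: finite_measure T by fact
  interpret M: finite_measure mu' by fact
  have spT: "space T = UNIV" using sets_eq_imp_space_eq[OF sT] by simp
  have km[measurable]: "k \<in> borel_measurable borel" by (rule borel_measurable_continuous_onI[OF kc])
  have Ab: "A \<in> sets borel" using cA compact_imp_closed borel_closed by blast
  have "open (-A)" using cA compact_imp_closed open_Compl by blast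
  then have nAb: "-A \<in> sets borel" by (rule borel_open)

  define lam where "lam = measure_of UNIV (sets borel) (\<lambda>S. emeasure T S + emeasure mu' S)"
  have sl[measurable_cong]: "sets lam = sets borel"
    unfolding lam_def using sets.sigma_sets_eq[of borel] by simp
  have el: "emeasure lam S = emeasure T S + emeasure mu' S" if S: "S \<in> sets borel" for S
  proof -
    have sa: "sigma_algebra UNIV (sets borel)" using sets.sigma_algebra_axioms[of borel] by simp
    have pos: "positive (sets borel) (\<lambda>S. emeasure T S + emeasure mu' S)" by (simp add: positive_def)
    have ca: "countably_additive (sets borel) (\<lambda>S. emeasure T S + emeasure mu' S)"
      unfolding countably_additive_def
    proof (intro allI impI)
      fix F :: "nat \<Rightarrow> (real^'d) set" assume F: "range F \<subseteq> sets borel" "disjoint_family F" "\<Union> (range F) \<in> sets borel"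
      have "(\<Sum>i. emeasure T (F i) + emeasure mu' (F i)) = (\<Sum>i. emeasure T (F i)) + (\<Sum>i. emeasure mu' (F i))"
        by (rule suminf_add[symmetric]) (auto intro: summableI)
      also have "\<dots> = emeasure T (\<Union>i. F i) + emeasure mu' (\<Union>i. F i)"
        using F sT sM by (simp add: suminf_emeasure)
      finally show "(\<Sum>i. emeasure T (F i) + emeasure mu' (F i)) = emeasure T (\<Union> (range F)) + emeasure mu' (\<Union> (range F))" .
    qed
    show ?thesis unfolding lam_def by (rule emeasure_measure_of_sigma[OF sa pos ca S])
  qed
  have spl: "space lam = UNIV" using sets_eq_imp_space_eq[OF sl] by simp
  have fl: "finite_measure lam"
  proof (rule finite_measureI)
    show "emeasure lam (space lam) \<noteq> \<infinity>"
      using el[of UNIV] T.emeasure_finite[of UNIV] M.emeasure_finite[of UNIV] by (simp add: spl ennreal_add_eq_top)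
  qed
  interpret L: finite_measure lam by fact
  have acM: "absolutely_continuous lam mu'" and acT: "absolutely_continuous lam T"
    unfolding absolutely_continuous_def using el sl sM sT by (auto simp: null_sets_def)
  have sMl: "sets mu' = sets lam" and sTl: "sets T = sets lam" using sM sT sl by auto
  obtain D0 where D0m: "D0 \<in> borel_measurable lam" and D0ae: "AE x in lam. RN_deriv lam mu' x = ennreal (D0 x)"
      and "AE x in mu'. 0 < D0 x" and D0nn: "\<And>x. 0 \<le> D0 x"
    using L.real_RN_deriv[OF fM acM sMl] by metis
  obtain D1 where D1m: "D1 \<in> borel_measurable lam" and D1ae: "AE x in lam. RN_deriv lam T x = ennreal (D1 x)"
      and "AE x in T. 0 < D1 x" and D1nn: "\<And>x. 0 \<le> D1 x"
    using L.real_RN_deriv[OF fT acT sTl] by metis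
  have D0b[measurable]: "D0 \<in> borel_measurable borel" using D0m sl measurable_cong_sets by blast
  have D1b[measurable]: "D1 \<in> borel_measurable borel" using D1m sl measurable_cong_sets by blast
  have dM: "density lam (\<lambda>x. ennreal (D0 x)) = mu'"
  proof -
    have "density lam (RN_deriv lam mu') = mu'" by (rule L.density_RN_deriv[OF acM sMl])
    moreover have "density lam (RN_deriv lam mu') = density lam (\<lambda>x. ennreal (D0 x))"
      by (rule density_cong) (use D0ae in auto)
    ultimately show ?thesis by simp
  qed
  have dT: "density lam (\<lambda>x. ennreal (D1 x)) = T"
  proof -
    have "density lam (RN_deriv lam T) = T" by (rule L.density_RN_deriv[OF acT sTl])
    moreover have "density lam (RN_deriv lam T) = density lam (\<lambda>x. ennreal (D1 x))"
      by (rule density_cong) (use D1ae in auto)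
    ultimately show ?thesis by simp
  qed
  have intM: "(\<integral>x. g x \<partial>mu') = (\<integral>x. D0 x * g x \<partial>lam)" if g[measurable]: "g \<in> borel_measurable borel" for g :: "_ \<Rightarrow> real"
  proof -
    have "(\<integral>x. g x \<partial>density lam (\<lambda>x. ennreal (D0 x))) = (\<integral>x. D0 x *\<^sub>R g x \<partial>lam)"
      by (rule integral_density) (auto simp: D0nn)
    then show ?thesis using dM by simp
  qed
  have intT: "(\<integral>x. g x \<partial>T) = (\<integral>x. D1 x * g x \<partial>lam)" if g[measurable]: "g \<in> borel_measurable borel" for g :: "_ \<Rightarrow> real"
  proof -
    have "(\<integral>x. g x \<partial>density lam (\<lambda>x. ennreal (D1 x))) = (\<integral>x. D1 x *\<^sub>R g x \<partial>lam)"
      by (rule integral_density) (auto simp: D1nn)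
    then show ?thesis using dT by simp
  qed
  have integM: "integrable lam (\<lambda>x. D0 x * g x)" if "integrable mu' g" and g[measurable]: "g \<in> borel_measurable borel" for g :: "_ \<Rightarrow> real"
  proof -
    have "integrable (density lam (\<lambda>x. ennreal (D0 x))) g \<longleftrightarrow> integrable lam (\<lambda>x. D0 x *\<^sub>R g x)"
      by (rule integrable_density) (auto simp: D0nn)
    then show ?thesis using dM that by simp
  qed
  have integT: "integrable lam (\<lambda>x. D1 x * g x)" if "integrable T g" and g[measurable]: "g \<in> borel_measurable borel" for g :: "_ \<Rightarrow> real"
  proof -
    have "integrable (density lam (\<lambda>x. ennreal (D1 x))) g \<longleftrightarrow> integrable lam (\<lambda>x. D1 x *\<^sub>R g x)"
      by (rule integrable_density) (auto simp: D1nn)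
    then show ?thesis using dT that by simp
  qed

  define f where "f t x = (1-t) * (D0 x * k x) + t * (D1 x * h x)" for t x
  define Tt where "Tt t = density lam (\<lambda>x. ennreal \<bar>f t x\<bar>)" for t
  define ht where "ht t x = (if 0 \<le> f t x then 1 else -1::real)" for t x
  have fm[measurable]: "f t \<in> borel_measurable borel" for t unfolding f_def by measurable
  have k_int: "integrable mu' k" by (rule nice_integrable_cont[OF cA niceM kc])
  have h_int: "integrable T h" using nice_integrable[OF cA niceT continuous_on_const[of UNIV 1] hm] h1 by simp
  have fi: "integrable lam (f t)" for t
    unfolding f_def using integM[OF k_int km] integT[OF h_int hm] by simp
  have sTt: "sets (Tt t) = sets borel" for t by (simp add: Tt_def sl)
  have AEA: "AE x in lam. x \<in> A"
  proof (rule AE_I')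
    show "-A \<in> null_sets lam" using el[OF nAb] T0 M0 nAb sl by (simp add: null_sets_def)
  qed auto
  have TtA: "emeasure (Tt t) (-A) = 0" for t
  proof -
    have "emeasure (Tt t) (-A) = (\<integral>\<^sup>+x. ennreal \<bar>f t x\<bar> * indicator (-A) x \<partial>lam)"
      unfolding Tt_def by (rule emeasure_density) (auto simp: sl nAb)
    also have "\<dots> = (\<integral>\<^sup>+x. 0 \<partial>lam)"
      by (rule nn_integral_cong_AE) (use AEA in \<open>auto simp: indicator_def\<close>)
    finally show ?thesis by simp
  qed
  have fTt: "finite_measure (Tt t)" for t
  proof (rule finite_measureI)
    have "emeasure (Tt t) (space (Tt t)) = (\<integral>\<^sup>+x. ennreal \<bar>f t x\<bar> * indicator (space lam) x \<partial>lam)"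
      unfolding Tt_def by (simp add: emeasure_density)
    also have "\<dots> = (\<integral>\<^sup>+x. ennreal (norm (f t x)) \<partial>lam)" by (simp add: spl)
    also have "\<dots> < \<infinity>" using fi[of t] unfolding integrable_iff_bounded by simp
    finally show "emeasure (Tt t) (space (Tt t)) \<noteq> \<infinity>" by simp
  qed
  have htm[measurable]: "ht t \<in> borel_measurable borel" for t unfolding ht_def by measurable
  have smeas: "signed_measure_on A (Tt t) (ht t)" for t
    unfolding signed_measure_on_def using sTt fTt TtA htm by (auto simp: ht_def)

  have rept: "reproduces n z0 (Tt t) (ht t)" for t
    unfolding reproduces_def
  proof
    fix p :: "real^'d \<Rightarrow> real" assume p: "p \<in> polys n"
    have pm[measurable]: "p \<in> borel_measurable borel" by (rule borel_measurable_continuous_onI[OF polys_cont[OF p]])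
    have ipk: "integrable mu' (\<lambda>x. p x * k x)"
      by (rule nice_integrable_cont[OF cA niceM]) (intro continuous_on_mult polys_cont[OF p] kc)
    have iph: "integrable T (\<lambda>x. p x * h x)"
      by (rule nice_integrable[OF cA niceT polys_cont[OF p] hm]) (simp add: h1)
    have "(\<integral>x. p x * ht t x \<partial>Tt t) = (\<integral>x. \<bar>f t x\<bar> *\<^sub>R (p x * ht t x) \<partial>lam)"
      unfolding Tt_def by (rule integral_density) auto
    also have "\<dots> = (\<integral>x. (1-t) * (D0 x * (p x * k x)) + t * (D1 x * (p x * h x)) \<partial>lam)"
    proof (rule Bochner_Integration.integral_cong[OF refl])
      fix x
      have "\<bar>f t x\<bar> * ht t x = f t x" by (simp add: ht_def abs_if)
      then have "\<bar>f t x\<bar> *\<^sub>R (p x * ht t x) = p x * f t x" by (simp add: algebra_simps)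
      also have "\<dots> = (1-t) * (D0 x * (p x * k x)) + t * (D1 x * (p x * h x))"
        by (simp add: f_def algebra_simps)
      finally show "\<bar>f t x\<bar> *\<^sub>R (p x * ht t x) = (1-t) * (D0 x * (p x * k x)) + t * (D1 x * (p x * h x))" .
    qed
    also have "\<dots> = (1-t) * (\<integral>x. D0 x * (p x * k x) \<partial>lam) + t * (\<integral>x. D1 x * (p x * h x) \<partial>lam)"
      using integM[OF ipk] integT[OF iph] by simp
    also have "\<dots> = (1-t) * (\<integral>x. p x * k x \<partial>mu') + t * (\<integral>x. p x * h x \<partial>T)"
      by (simp add: intM intT)
    also have "\<dots> = (1-t) * p z0 + t * p z0" using krep rep p by (simp add: reproduces_def)
    also have "\<dots> = p z0" by (simp add: algebra_simps)
    finally show "(\<integral>x. p x * ht t x \<partial>Tt t) = p z0" .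
  qed

  have TUA: "measure T (space T) = measure T A"
  proof -
    have "measure T (-A) = 0" using T0 by (simp add: measure_def)
    moreover have "measure T (A \<union> -A) = measure T A + measure T (-A)"
      by (rule T.finite_measure_Union) (use Ab nAb sT in auto)
    ultimately show ?thesis by (simp add: spT)
  qed

  have masst: "measure (Tt t) A \<le> (1-t) * (\<integral>x. \<bar>k x\<bar> \<partial>mu') + t * measure T A" if t: "0 < t" "t < 1" for t
  proof -
    interpret Tt: finite_measure "Tt t" by (rule fTt)
    have "measure (Tt t) A \<le> measure (Tt t) (space (Tt t))" by (rule Tt.bounded_measure)
    also have "\<dots> = (\<integral>x. 1 \<partial>Tt t)" by simp
    also have "\<dots> = (\<integral>x. \<bar>f t x\<bar> *\<^sub>R 1 \<partial>lam)" unfolding Tt_def by (rule integral_density) auto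
    also have "\<dots> \<le> (\<integral>x. (1-t) * (D0 x * \<bar>k x\<bar>) + t * (D1 x * 1) \<partial>lam)"
    proof (rule integral_mono)
      show "integrable lam (\<lambda>x. \<bar>f t x\<bar> *\<^sub>R 1)" using fi[of t] by simp
      have "integrable lam (\<lambda>x. D0 x * \<bar>k x\<bar>)" by (rule integM) (use k_int in auto)
      moreover have "integrable lam (\<lambda>x. D1 x * 1)" by (rule integT) auto
      ultimately show "integrable lam (\<lambda>x. (1-t) * (D0 x * \<bar>k x\<bar>) + t * (D1 x * 1))" by simp
      fix x
      have "\<bar>f t x\<bar> \<le> \<bar>(1-t) * (D0 x * k x)\<bar> + \<bar>t * (D1 x * h x)\<bar>" unfolding f_def by (rule abs_triangle_ineq)
      also have "\<dots> = (1-t) * (D0 x * \<bar>k x\<bar>) + t * (D1 x * 1)"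
        using t D0nn[of x] D1nn[of x] h1[of x] by (simp add: abs_mult)
      finally show "\<bar>f t x\<bar> *\<^sub>R 1 \<le> (1-t) * (D0 x * \<bar>k x\<bar>) + t * (D1 x * 1)" by simp
    qed
    also have "\<dots> = (1-t) * (\<integral>x. D0 x * \<bar>k x\<bar> \<partial>lam) + t * (\<integral>x. D1 x * 1 \<partial>lam)"
    proof -
      have "integrable lam (\<lambda>x. D0 x * \<bar>k x\<bar>)" by (rule integM) (use k_int in auto)
      moreover have "integrable lam (\<lambda>x. D1 x * 1)" by (rule integT) auto
      ultimately show ?thesis by simp
    qed
    also have "\<dots> = (1-t) * (\<integral>x. \<bar>k x\<bar> \<partial>mu') + t * (\<integral>x. 1 \<partial>T)"
      using intM[of "\<lambda>x. \<bar>k x\<bar>"] intT[of "\<lambda>x. 1"] by simp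
    also have "\<dots> = (1-t) * (\<integral>x. \<bar>k x\<bar> \<partial>mu') + t * measure T A" using TUA by simp
    finally show ?thesis .
  qed

  obtain B :: "(real^'d) set set" where B: "countable B" "topological_basis B"
    using ex_countable_basis by blast
  have opn: "\<And>U. U \<in> B \<Longrightarrow> open U" using B(2) topological_basis_open by auto
  define Bad where "Bad = (\<Union>U\<in>{U\<in>B. 0 < emeasure T U}. {t\<in>{0<..<1::real}. emeasure (Tt t) U = 0})"
  have one: "t = s" if U: "U \<in> B" "0 < emeasure T U" and ts: "t \<in> {0<..<1}" "s \<in> {0<..<1}"
    and e: "emeasure (Tt t) U = 0" "emeasure (Tt s) U = 0" for U t s
  proof (rule ccontr)
    assume ne: "t \<noteq> s"
    have Ub[measurable]: "U \<in> sets borel" using opn[OF U(1)] by simp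
    have z: "AE x in lam. x \<in> U \<longrightarrow> f r x = 0" if "emeasure (Tt r) U = 0" for r
    proof -
      have "emeasure (Tt r) U = (\<integral>\<^sup>+x. ennreal \<bar>f r x\<bar> * indicator U x \<partial>lam)"
        unfolding Tt_def by (rule emeasure_density) (auto simp: sl Ub)
      then have "(\<integral>\<^sup>+x. ennreal \<bar>f r x\<bar> * indicator U x \<partial>lam) = 0" using that by simp
      moreover have mb0: "(\<lambda>x. ennreal \<bar>f r x\<bar> * indicator U x) \<in> borel_measurable borel" by measurable
      then have mb: "(\<lambda>x. ennreal \<bar>f r x\<bar> * indicator U x) \<in> borel_measurable lam"
        using sl measurable_cong_sets by blast
      ultimately have "AE x in lam. ennreal \<bar>f r x\<bar> * indicator U x = 0"
        using nn_integral_0_iff_AE[OF mb] by simp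
      then show ?thesis by eventually_elim (auto simp: indicator_def)
    qed
    have "AE x in lam. x \<in> U \<longrightarrow> D1 x = 0"
      using z[OF e(1)] z[OF e(2)]
    proof eventually_elim
      case (elim x)
      show ?case
      proof
        assume xU: "x \<in> U"
        have "D1 x * h x = 0"
          by (rule lin2[of t "D0 x * k x" "D1 x * h x" s]) (use elim xU ne in \<open>auto simp: f_def\<close>)
        then show "D1 x = 0" using h1[of x] by auto
      qed
    qed
    then have "(\<integral>\<^sup>+x. ennreal (D1 x) * indicator U x \<partial>lam) = (\<integral>\<^sup>+x. 0 \<partial>lam)"
      by (intro nn_integral_cong_AE) (auto simp: indicator_def elim!: eventually_mono)
    moreover have "emeasure T U = (\<integral>\<^sup>+x. ennreal (D1 x) * indicator U x \<partial>lam)"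
      by (subst dT[symmetric], rule emeasure_density) (auto simp: sl Ub)
    ultimately show False using U(2) by simp
  qed
  have cBad: "countable Bad"
    unfolding Bad_def
  proof (rule countable_UN)
    show "countable {U\<in>B. 0 < emeasure T U}" by (rule countable_subset[OF _ B(1)]) auto
    fix U assume U: "U \<in> {U\<in>B. 0 < emeasure T U}"
    show "countable {t\<in>{0<..<1::real}. emeasure (Tt t) U = 0}"
    proof (cases "{t\<in>{0<..<1::real}. emeasure (Tt t) U = 0} = {}")
      case True show ?thesis by (subst True) simp
    next
      case False
      then obtain t0 where t0: "t0 \<in> {t\<in>{0<..<1::real}. emeasure (Tt t) U = 0}" by blast
      have "{t\<in>{0<..<1::real}. emeasure (Tt t) U = 0} \<subseteq> {t0}"
        using one[of U _ t0] U t0 by auto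
      then show ?thesis by (rule countable_subset) simp
    qed
  qed
  obtain t where t: "t \<in> {0<..<1::real}" "t \<notin> Bad"
  proof -
    have "\<not> {0<..<1::real} \<subseteq> Bad"
    proof
      assume "{0<..<1::real} \<subseteq> Bad"
      then have "countable {0<..<1::real}" using cBad countable_subset by blast
      then show False using uncountable_open_interval[of "0::real" 1] by simp
    qed
    then show ?thesis using that by blast
  qed
  have supp: "msupport T \<subseteq> msupport (Tt t)"
  proof
    fix x assume x: "x \<in> msupport T"
    show "x \<in> msupport (Tt t)" unfolding msupport_def
    proof (intro CollectI allI impI)
      fix V assume V: "open V \<and> x \<in> V"
      obtain U where U: "U \<in> B" "x \<in> U" "U \<subseteq> V" using topological_basisE[OF B(2), of V x] V by blast
      have TU: "0 < emeasure T U" using x opn[OF U(1)] U(2) by (auto simp: msupport_def)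
      have "emeasure (Tt t) U \<noteq> 0" using t U TU by (auto simp: Bad_def)
      then have "0 < emeasure (Tt t) U" by (simp add: zero_less_iff_neq_zero)
      also have "emeasure (Tt t) U \<le> emeasure (Tt t) V"
        by (rule emeasure_mono) (use U V sTt in auto)
      finally show "0 < emeasure (Tt t) V" .
    qed
  qed
  have "0 < t" "t < 1" using t(1) by auto
  then have m: "measure (Tt t) A \<le> (1-t) * (\<integral>x. \<bar>k x\<bar> \<partial>mu') + t * measure T A" by (rule masst)
  show ?thesis
    by (rule bexI[OF _ t(1)], rule exI[of _ "Tt t"], rule exI[of _ "ht t"]) (use smeas[of t] rept[of t] m supp in blast)
qed





theorem mainTheorem3:
  fixes A :: "(real^'d::finite) set" and n :: nat and z0 :: "real^'d"
    and T :: "(real^'d) measure" and h :: "real^'d \<Rightarrow> real"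
  assumes "compact A" and "z0 \<notin> A"
    and "in_S A n z0 T h" and "reproduces n z0 T h"
    and "\<forall>T' h'. in_S A n z0 T' h' \<and> reproduces n z0 T' h' \<longrightarrow> measure T A \<le> measure T' A"
  shows "optimal_prediction_measure A n z0 (scale_measure (ennreal (1 / measure T A)) T)"
proof -
  note cA = assms(1) and rep = assms(4) and minT = assms(5)
  from assms(3) obtain mu where opt: "optimal_prediction_measure A n z0 mu"
    and suppS: "msupport mu \<subseteq> msupport T" and sm: "signed_measure_on A T h"
    by (auto simp: in_S_def)
  have sT: "sets T = sets borel" and fT: "finite_measure T" and T0: "emeasure T (-A) = 0"
    and hm[measurable]: "h \<in> borel_measurable borel" and h1: "\<And>x. \<bar>h x\<bar> = 1"
    using sm by (auto simp: signed_measure_on_def)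
  have niceT: "nice A T" using sT fT T0 by (simp add: nice_def)
  interpret T: finite_measure T by fact
  have spT: "space T = UNIV" using sets_eq_imp_space_eq[OF sT] by simp
  have Ab: "A \<in> sets borel" using cA compact_imp_closed borel_closed by blast
  have "open (-A)" using cA compact_imp_closed open_Compl by blast
  then have nAb: "-A \<in> sets borel" by (rule borel_open)
  have TUA: "measure T (space T) = measure T A"
  proof -
    have "measure T (-A) = 0" using T0 by (simp add: measure_def)
    moreover have "measure T (A \<union> -A) = measure T A + measure T (-A)"
      by (rule T.finite_measure_Union) (use Ab nAb sT in auto)
    ultimately show ?thesis by (simp add: spT)
  qed
  define TA where "TA = measure T A"
  have TA0: "TA > 0"
  proof (rule ccontr)
    assume "\<not> TA > 0"
    then have "TA = 0" using measure_nonneg[of T A] by (simp add: TA_def)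
    then have "emeasure T (space T) = 0" using TUA by (simp add: T.emeasure_eq_measure TA_def)
    then have "AE x in T. h x = 0" by (intro AE_I'[of "space T"]) (auto simp: null_sets_def)
    then have "(\<integral>x. h x \<partial>T) = 0" by (rule integral_eq_zero_AE)
    moreover have "(\<integral>x. 1 * h x \<partial>T) = 1" using rep polys_one[of n] unfolding reproduces_def by fastforce
    ultimately show False by simp
  qed
  define c where "c = 1 / TA"
  have c0: "c > 0" using TA0 by (simp add: c_def)
  define mu0 where "mu0 = scale_measure (ennreal c) T"
  have sm0: "sets mu0 = sets borel" by (simp add: mu0_def sT)
  have pm0: "prob_measure_on A mu0"
    unfolding prob_measure_on_def
  proof (intro conjI)
    show "sets mu0 = sets borel" by (rule sm0)
    have "emeasure mu0 (space mu0) = ennreal c * ennreal TA"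
      by (simp add: mu0_def space_scale_measure T.emeasure_eq_measure TUA TA_def)
    also have "\<dots> = 1" using TA0 c0 by (simp add: ennreal_mult[symmetric] c_def)
    finally show "prob_space mu0" by (rule prob_spaceI)
    show "emeasure mu0 (-A) = 0" by (simp add: mu0_def T0)
  qed
  have nice0: "nice A mu0" by (rule prob_nice[OF pm0])
  have int0: "(\<integral>x. g x \<partial>mu0) = c * (\<integral>x. g x \<partial>T)" if "g \<in> borel_measurable borel" for g :: "_ \<Rightarrow> real"
    unfolding mu0_def by (rule integral_scale) (use c0 that sT measurable_cong_sets in auto)
  have supp0: "msupport mu0 = msupport T" unfolding mu0_def by (rule msupport_scale) (simp add: c0)
  have optmu: "prob_measure_on A mu" "non_degenerate n mu"
    and optK: "\<And>mu'. prob_measure_on A mu' \<Longrightarrow> non_degenerate n mu' \<Longrightarrow> Kn n mu z0 \<le> Kn n mu' z0"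
    using opt by (auto simp: optimal_prediction_measure_def)
  have smu: "sets mu = sets borel" using optmu(1) by (simp add: prob_measure_on_def)

  have nd0: "non_degenerate n mu0"
    unfolding non_degenerate_def
  proof (intro ballI impI)
    fix p :: "real^'d \<Rightarrow> real" assume p: "p \<in> polys n" and pn: "p \<noteq> (\<lambda>x. 0)"
    have pc: "continuous_on UNIV p" by (rule polys_cont[OF p])
    have pmeas[measurable]: "p \<in> borel_measurable borel" by (rule borel_measurable_continuous_onI[OF pc])
    show "(\<integral>x. (p x)^2 \<partial>mu0) > 0"
    proof (rule ccontr)
      assume "\<not> (\<integral>x. (p x)^2 \<partial>mu0) > 0"
      moreover have "(\<integral>x. (p x)^2 \<partial>mu0) \<ge> 0" by (rule integral_nonneg_AE) auto
      ultimately have z: "(\<integral>x. (p x)^2 \<partial>mu0) = 0" by simp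
      have ip: "integrable mu0 (\<lambda>x. (p x)^2)"
        by (rule nice_integrable_cont[OF cA nice0]) (intro continuous_on_power pc)
      have ae: "AE x in mu0. (p x)^2 = 0" using z integral_nonneg_eq_0_iff_AE[OF ip] by simp
      have pz: "p x = 0" if x: "x \<in> msupport mu0" for x
      proof (rule ccontr)
        assume px: "p x \<noteq> 0"
        define U where "U = p -` (-{0})"
        have oU: "open U" unfolding U_def by (rule open_vimage[OF _ pc]) auto
        have "0 < emeasure mu0 U" using x oU px by (auto simp: msupport_def U_def)
        moreover have "U \<in> null_sets mu0"
        proof (subst AE_iff_null_sets)
          show "U \<in> sets mu0" using oU sm0 by simp
          show "AE x in mu0. x \<notin> U" using ae by eventually_elim (simp add: U_def)
        qed
        ultimately show False by (simp add: null_sets_def)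
      qed
      have "AE x in mu. x \<in> msupport mu" by (rule ae_msupport[OF smu])
      then have "AE x in mu. (p x)^2 = 0"
        by eventually_elim (use suppS supp0 pz in auto)
      then have "(\<integral>x. (p x)^2 \<partial>mu) = 0" by (rule integral_eq_zero_AE)
      moreover have "(\<integral>x. (p x)^2 \<partial>mu) > 0" using optmu(2) p pn by (simp add: non_degenerate_def)
      ultimately show False by simp
    qed
  qed

  have upper: "Kn n mu0 z0 \<le> TA^2"
  proof -
    interpret N0: nd A mu0 n using cA nice0 nd0 by unfold_locales
    obtain k where kp: "k \<in> polys n" and krep: "\<forall>p\<in>polys n. (\<integral>x. p x * k x \<partial>mu0) = p z0"
      and K: "Kn n mu0 z0 = k z0"
      using N0.Kn_kernel[of z0] by blast
    have kc: "continuous_on UNIV k" by (rule polys_cont[OF kp])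
    have km[measurable]: "k \<in> borel_measurable borel" by (rule borel_measurable_continuous_onI[OF kc])
    define I where "I = (\<integral>x. k x * k x \<partial>T)"
    have KI: "Kn n mu0 z0 = c * I"
      using K krep kp int0[of "\<lambda>x. k x * k x"] by (simp add: I_def)
    have kk: "k z0 = (\<integral>x. k x * k x \<partial>mu0)" using krep kp by simp
    have "(\<integral>x. k x * k x \<partial>mu0) \<ge> 0" by (rule integral_nonneg_AE) auto
    then have Knn: "Kn n mu0 z0 \<ge> 0" using K kk by simp
    have I_eq: "I = TA * Kn n mu0 z0" using KI TA0 by (simp add: c_def)
    have kh: "k z0 = (\<integral>x. k x * h x \<partial>T)" using rep kp by (simp add: reproduces_def)
    have sq: "(\<lambda>x. (k x * h x)^2) = (\<lambda>x. k x * k x)"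
    proof
      fix x
      have "(h x)^2 = 1" using h1[of x] by (metis power2_abs power_one)
      then show "(k x * h x)^2 = k x * k x" by (simp add: power_mult_distrib power2_eq_square)
    qed
    have "(\<integral>x. k x * h x \<partial>T)^2 \<le> measure T (space T) * (\<integral>x. (k x * h x)^2 \<partial>T)"
    proof (rule cs_ineq[OF fT])
      show "integrable T (\<lambda>x. k x * h x)" by (rule nice_integrable[OF cA niceT kc hm]) (simp add: h1)
      show "integrable T (\<lambda>x. (k x * h x)^2)" unfolding sq
        by (rule nice_integrable_cont[OF cA niceT]) (intro continuous_on_mult kc)
    qed
    then have "(Kn n mu0 z0)^2 \<le> TA * I" using K kh sq TUA by (simp add: TA_def I_def)
    then have "Kn n mu0 z0 * Kn n mu0 z0 \<le> TA^2 * Kn n mu0 z0"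
      using I_eq by (simp add: power2_eq_square algebra_simps)
    then show ?thesis
    proof (cases "Kn n mu0 z0 = 0")
      case True then show ?thesis by simp
    next
      case False
      then have "Kn n mu0 z0 > 0" using Knn by simp
      then show ?thesis using \<open>Kn n mu0 z0 * Kn n mu0 z0 \<le> TA^2 * Kn n mu0 z0\<close> by (rule mult_right_le_imp_le[rotated])
    qed
  qed

  have lower: "TA^2 \<le> Kn n mu' z0" if pm': "prob_measure_on A mu'" and nd': "non_degenerate n mu'" for mu'
  proof -
    have nice': "nice A mu'" by (rule prob_nice[OF pm'])
    interpret N1: nd A mu' n using cA nice' nd' by unfold_locales
    obtain k where kp: "k \<in> polys n" and krep: "\<forall>p\<in>polys n. (\<integral>x. p x * k x \<partial>mu') = p z0"
      and K: "Kn n mu' z0 = k z0"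
      using N1.Kn_kernel[of z0] by blast
    have kc: "continuous_on UNIV k" by (rule polys_cont[OF kp])
    define L1 where "L1 = (\<integral>x. \<bar>k x\<bar> \<partial>mu')"
    obtain t T' h' where t: "t \<in> {0<..<1::real}" and sm': "signed_measure_on A T' h'"
      and rep': "reproduces n z0 T' h'"
      and mass: "measure T' A \<le> (1-t) * L1 + t * measure T A"
      and supp': "msupport T \<subseteq> msupport T'"
      using competitor[OF cA sm rep pm' kc krep] unfolding L1_def by blast
    have "in_S A n z0 T' h'" unfolding in_S_def using sm' opt suppS supp' by blast
    then have "TA \<le> measure T' A" using minT rep' unfolding TA_def by blast
    then have "(1-t) * TA \<le> (1-t) * L1" using mass by (simp add: TA_def algebra_simps)
    then have TL: "TA \<le> L1" using t by simp
    have pM: "prob_space mu'" using pm' by (simp add: prob_measure_on_def)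
    have fM: "finite_measure mu'" using pM by (simp add: prob_space_def)
    have sp1: "measure mu' (space mu') = 1" using pM by (simp add: prob_space.prob_space)
    have sq: "(\<lambda>x. \<bar>k x\<bar>^2) = (\<lambda>x. k x * k x)" by (simp add: power2_eq_square)
    have "L1^2 \<le> measure mu' (space mu') * (\<integral>x. \<bar>k x\<bar>^2 \<partial>mu')"
      unfolding L1_def
    proof (rule cs_ineq[OF fM])
      show "integrable mu' (\<lambda>x. \<bar>k x\<bar>)" by (rule integrable_abs, rule nice_integrable_cont[OF cA nice' kc])
      show "integrable mu' (\<lambda>x. \<bar>k x\<bar>^2)" unfolding sq
        by (rule nice_integrable_cont[OF cA nice']) (intro continuous_on_mult kc)
    qed
    also have "\<dots> = (\<integral>x. k x * k x \<partial>mu')" using sp1 sq by simp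
    also have "\<dots> = Kn n mu' z0" using K krep kp by simp
    finally have "L1^2 \<le> Kn n mu' z0" .
    moreover have "TA^2 \<le> L1^2" using TL TA0 by (intro power_mono) auto
    ultimately show ?thesis by linarith
  qed

  have "optimal_prediction_measure A n z0 mu0"
    unfolding optimal_prediction_measure_def
    using pm0 nd0 upper lower by (auto intro: order_trans)
  then show ?thesis by (simp add: mu0_def c_def TA_def)
qed


end
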